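(* Consider the two-phase, two-camp opinion game described in the context, with phase-independent camp weights $w_{ig}, w_{ib}$. Let $\mathbf{r}=(\mathbf{I}-\mathbf{w}^T)^{-1}\mathbf{1}$ and $\mathbf{s}=(\mathbf{I}-\mathbf{w}^T)^{-1}(\mathbf{r}\circ\mathbf{w^0})$. Then the good camp's utility is $$\sum_i v_i^{(2)}=\sum_i s_i w_{ii}^0 v_i^0+\sum_i s_i w_{ig}x_i^{(1)}-\sum_i s_i w_{ib}y_i^{(1)}+\sum_i r_i w_{ig}x_i^{(2)}-\sum_i r_i w_{ib}y_i^{(2)},$$ and the following is an optimal strategy for the good camp regardless of the bad camp's strategy (and symmetrically for the bad camp, with $w_{ib}$ in place of $w_{ig}$ and $k_b$ in place of $k_g$), so that the profile of these strategies is a Nash equilibrium: let $M=\max_i \max\{s_i w_{ig}, r_i w_{ig}\}$. If $M\le 0$, invest nothing. If $M>0$, invest the entire budget $k_g$ on a node $i$ attaining $M$; if $\max_i s_i w_{ig}>\max_j r_j w_{jg}$ the whole budget is invested in the first phase (on a maximizer of $s_i w_{ig}$), if $\max_i s_i w_{ig}<\max_j r_j w_{jg}$ the whole budget is invested in the second phase (on a maximizer of $r_j w_{jg}$), and if they are equal either phase is optimal.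
   Context: A social network has node set $N$, $|N|=n$, and a real $n\times n$ matrix $\mathbf{w}=(w_{ij})$ of influence weights with $\sum_j |w_{ij}|<1$ for every $i$ (so $\mathbf{I}-\mathbf{w}$ is invertible). Each node $i$ has an initial opinion $v_i^0$, a weight $w_{ii}^0$ on its initial bias, and weights $w_{ig}, w_{ib}$ attributed to the good and bad camps; with $|w_{ii}^0|+\sum_j|w_{ij}|+|w_{ig}|+|w_{ib}|\le 1$. Vectors $\mathbf{w^0},\mathbf{w_g},\mathbf{w_b}$ collect these; $\circ$ is the entrywise (Hadamard) product and $\mathbf{1}$ the all-ones vector. The good camp chooses nonnegative vectors $\mathbf{x^{(1)}},\mathbf{x^{(2)}}$ with $\sum_i (x_i^{(1)}+x_i^{(2)})\le k_g$, the bad camp nonnegative $\mathbf{y^{(1)}},\mathbf{y^{(2)}}$ with $\sum_i (y_i^{(1)}+y_i^{(2)})\le k_b$ ($k_g,k_b\ge 0$). Opinions evolve by $\mathbf{v^{(0)}}=\mathbf{v^0}$ and, for phases $p=1,2$, $\mathbf{v^{(p)}}=(\mathbf{I}-\mathbf{w})^{-1}(\mathbf{w^0}\circ\mathbf{v^{(p-1)}}+\mathbf{w_g}\circ\mathbf{x^{(p)}}-\mathbf{w_b}\circ\mathbf{y^{(p)}})$. The game is zero-sum: the good camp's utility is $\sum_i v_i^{(2)}$ and the bad camp's is $-\sum_i v_i^{(2)}$. *)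

theory Defs
  imports "HOL-Analysis.Analysis"
begin

definition had :: "real^'n \<Rightarrow> real^'n \<Rightarrow> real^'n" where
  "had x y = (\<chi> i. x $ i * y $ i)"

definition phase_step ::
  "real^'n^'n \<Rightarrow> real^'n \<Rightarrow> real^'n \<Rightarrow> real^'n \<Rightarrow> real^'n \<Rightarrow> real^'n \<Rightarrow> real^'n \<Rightarrow> real^'n" where
  "phase_step w w0 wg wb v x y =
     matrix_inv (mat 1 - w) *v (had w0 v + had wg x - had wb y)"

definition opinion2 ::
  "real^'n^'n \<Rightarrow> real^'n \<Rightarrow> real^'n \<Rightarrow> real^'n \<Rightarrow> real^'n
   \<Rightarrow> real^'n \<Rightarrow> real^'n \<Rightarrow> real^'n \<Rightarrow> real^'n \<Rightarrow> real^'n" where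
  "opinion2 w w0 wg wb v0 x1 x2 y1 y2 =
     phase_step w w0 wg wb (phase_step w w0 wg wb v0 x1 y1) x2 y2"

text \<open>Good camp's utility: sum of final opinions (bad camp's is its negation).\<close>
definition utility ::
  "real^'n^'n \<Rightarrow> real^'n \<Rightarrow> real^'n \<Rightarrow> real^'n \<Rightarrow> real^'n
   \<Rightarrow> real^'n \<Rightarrow> real^'n \<Rightarrow> real^'n \<Rightarrow> real^'n \<Rightarrow> real" where
  "utility w w0 wg wb v0 x1 x2 y1 y2 = (\<Sum>i\<in>UNIV. opinion2 w w0 wg wb v0 x1 x2 y1 y2 $ i)"

definition rvec :: "real^'n^'n \<Rightarrow> real^'n" where
  "rvec w = matrix_inv (mat 1 - transpose w) *v vec 1"

definition svec :: "real^'n^'n \<Rightarrow> real^'n \<Rightarrow> real^'n" where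
  "svec w w0 = matrix_inv (mat 1 - transpose w) *v had (rvec w) w0"

definition feasible :: "real \<Rightarrow> real^'n \<Rightarrow> real^'n \<Rightarrow> bool" where
  "feasible k x1 x2 \<longleftrightarrow>
     (\<forall>i. 0 \<le> x1 $ i \<and> 0 \<le> x2 $ i) \<and> (\<Sum>i\<in>UNIV. x1 $ i + x2 $ i) \<le> k"

definition opt_strategy ::
  "real^'n \<Rightarrow> real^'n \<Rightarrow> real^'n \<Rightarrow> real \<Rightarrow> real^'n \<Rightarrow> real^'n \<Rightarrow> bool" where
  "opt_strategy s r c k x1 x2 \<longleftrightarrow>
     (let A = Max (range (\<lambda>i. s $ i * c $ i));
          B = Max (range (\<lambda>i. r $ i * c $ i));
          M = max A B
      in (M \<le> 0 \<longrightarrow> x1 = 0 \<and> x2 = 0) \<and>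
         (0 < M \<longrightarrow>
            (B \<le> A \<and> (\<exists>i. s $ i * c $ i = A \<and> x1 = axis i k \<and> x2 = 0)) \<or>
            (A \<le> B \<and> (\<exists>j. r $ j * c $ j = B \<and> x1 = 0 \<and> x2 = axis j k))))"

end

theory Submission
  imports Defs
begin

lemma inv_props:
  fixes A :: "real^'n^'n"
  assumes "invertible A"
  shows "A ** matrix_inv A = mat 1" "matrix_inv A ** A = mat 1"
proof -
  have "\<exists>A'. A ** A' = mat 1 \<and> A' ** A = mat 1" using assms by (simp add: invertible_def)
  from someI_ex[OF this] show "A ** matrix_inv A = mat 1" "matrix_inv A ** A = mat 1"
    by (simp_all add: matrix_inv_def)
qed

lemma inv_transpose:
  fixes A :: "real^'n^'n"
  assumes "invertible A"
  shows "matrix_inv (transpose A) = transpose (matrix_inv A)"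
proof -
  have tA: "invertible (transpose A)" using assms by (rule transpose_invertible)
  have 1: "transpose (matrix_inv A) ** transpose A = mat 1"
    by (metis inv_props(1)[OF assms] matrix_transpose_mul transpose_mat)
  have "matrix_inv (transpose A) = (transpose (matrix_inv A) ** transpose A) ** matrix_inv (transpose A)"
    by (simp add: 1)
  also have "\<dots> = transpose (matrix_inv A)"
    by (simp add: matrix_mul_assoc[symmetric] inv_props(1)[OF tA])
  finally show ?thesis .
qed

lemma swap_sum:
  fixes P :: "real^'n^'n"
  shows "(\<Sum>i\<in>UNIV. c$i * (P *v u)$i) = (\<Sum>j\<in>UNIV. (transpose P *v c)$j * u$j)"
proof -
  have "(\<Sum>i\<in>UNIV. c$i * (P *v u)$i) = (\<Sum>i\<in>UNIV. \<Sum>j\<in>UNIV. c$i * P$i$j * u$j)"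
    by (simp add: matrix_vector_mult_def sum_distrib_left mult_ac)
  also have "\<dots> = (\<Sum>j\<in>UNIV. \<Sum>i\<in>UNIV. c$i * P$i$j * u$j)" by (rule sum.swap)
  also have "\<dots> = (\<Sum>j\<in>UNIV. (transpose P *v c)$j * u$j)"
    unfolding matrix_vector_mult_def transpose_def
    by (intro sum.cong refl, simp only: vec_lambda_beta, subst sum_distrib_right, simp add: mult_ac)
  finally show ?thesis .
qed

lemma dd_invertible:
  fixes w :: "real^'n^'n"
  assumes row: "\<And>i. (\<Sum>j\<in>UNIV. \<bar>w $ i $ j\<bar>) < 1"
  shows "invertible (mat 1 - w)"
proof -
  have "\<forall>x. (mat 1 - w) *v x = 0 \<longrightarrow> x = 0"
  proof (intro allI impI)
    fix x :: "real^'n"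
    assume "(mat 1 - w) *v x = 0"
    hence "x = w *v x" by (simp add: matrix_vector_mult_diff_rdistrib)
    have xi: "x$i = (\<Sum>j\<in>UNIV. w$i$j * x$j)" for i
    proof -
      from \<open>x = w *v x\<close> have "x$i = (w *v x)$i" by (rule arg_cong)
      then show ?thesis by (simp add: matrix_vector_mult_def)
    qed
    define m where "m = Max (range (\<lambda>i. \<bar>x$i\<bar>))"
    have mge: "\<And>j. \<bar>x$j\<bar> \<le> m" unfolding m_def by (rule Max_ge) auto
    have "m \<in> range (\<lambda>i. \<bar>x$i\<bar>)" unfolding m_def by (rule Max_in) auto
    then obtain i where im: "\<bar>x$i\<bar> = m" by auto
    have "m \<le> (\<Sum>j\<in>UNIV. \<bar>w$i$j\<bar> * m)"
    proof -
      have "m = \<bar>\<Sum>j\<in>UNIV. w$i$j * x$j\<bar>" using im xi[of i] by simp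
      also have "\<dots> \<le> (\<Sum>j\<in>UNIV. \<bar>w$i$j * x$j\<bar>)" by (rule sum_abs)
      also have "\<dots> \<le> (\<Sum>j\<in>UNIV. \<bar>w$i$j\<bar> * m)"
        by (rule sum_mono) (simp add: abs_mult mge mult_left_mono)
      finally show ?thesis .
    qed
    hence "m \<le> (\<Sum>j\<in>UNIV. \<bar>w$i$j\<bar>) * m" by (simp add: sum_distrib_right)
    moreover have "0 \<le> m" using im by auto
    ultimately have "m = 0"
    proof -
      assume a: "m \<le> (\<Sum>j\<in>UNIV. \<bar>w$i$j\<bar>) * m" "0 \<le> m"
      show "m = 0"
      proof (rule ccontr)
        assume "m \<noteq> 0"
        with a have "0 < m" by simp
        then have "(\<Sum>j\<in>UNIV. \<bar>w$i$j\<bar>) * m < 1 * m"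
          using row[of i] by (intro mult_strict_right_mono) auto
        with a show False by simp
      qed
    qed
    have "\<bar>x$j\<bar> \<le> 0" for j using mge[of j] \<open>m = 0\<close> by simp
    thus "x = 0" by (simp add: vec_eq_iff)
  qed
  thus ?thesis using invertible_left_inverse matrix_left_invertible_ker by blast
qed

lemma axis_sum: "(\<Sum>j\<in>UNIV. a$j * (axis i (k::real)) $ j) = a$i * k"
  by (simp add: axis_def if_distrib[of "\<lambda>t. a$_ * t"] cong: if_cong)

lemma opt_lemma:
  fixes s r c x1 x2 :: "real^'n"
  assumes opt: "opt_strategy s r c k x1 x2" and k: "0 \<le> k"
  shows "feasible k x1 x2 \<and> (\<forall>x1' x2'. feasible k x1' x2' \<longrightarrow>
     (\<Sum>i\<in>UNIV. s$i * c$i * x1'$i) + (\<Sum>i\<in>UNIV. r$i * c$i * x2'$i)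
     \<le> (\<Sum>i\<in>UNIV. s$i * c$i * x1$i) + (\<Sum>i\<in>UNIV. r$i * c$i * x2$i))"
proof -
  define A where "A = Max (range (\<lambda>i. s $ i * c $ i))"
  define B where "B = Max (range (\<lambda>i. r $ i * c $ i))"
  define M where "M = max A B"
  have Age: "\<And>i. s$i * c$i \<le> A" unfolding A_def by (rule Max_ge) auto
  have Bge: "\<And>i. r$i * c$i \<le> B" unfolding B_def by (rule Max_ge) auto
  have bound: "(\<Sum>i\<in>UNIV. s$i * c$i * x1'$i) + (\<Sum>i\<in>UNIV. r$i * c$i * x2'$i) \<le> max M 0 * k"
    if f: "feasible k x1' x2'" for x1' x2' :: "real^'n"
  proof -
    have nn: "\<And>i. 0 \<le> x1'$i" "\<And>i. 0 \<le> x2'$i" and sk: "(\<Sum>i\<in>UNIV. x1' $ i + x2' $ i) \<le> k"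
      using f by (auto simp: feasible_def)
    have "(\<Sum>i\<in>UNIV. s$i * c$i * x1'$i) + (\<Sum>i\<in>UNIV. r$i * c$i * x2'$i)
        = (\<Sum>i\<in>UNIV. s$i * c$i * x1'$i + r$i * c$i * x2'$i)" by (simp add: sum.distrib)
    also have "\<dots> \<le> (\<Sum>i\<in>UNIV. max M 0 * (x1'$i + x2'$i))"
    proof (rule sum_mono)
      fix i
      have "s$i * c$i * x1'$i \<le> max M 0 * x1'$i"
        by (rule mult_right_mono) (use Age[of i] nn in \<open>auto simp: M_def\<close>)
      moreover have "r$i * c$i * x2'$i \<le> max M 0 * x2'$i"
        by (rule mult_right_mono) (use Bge[of i] nn in \<open>auto simp: M_def\<close>)
      ultimately show "s$i * c$i * x1'$i + r$i * c$i * x2'$i \<le> max M 0 * (x1'$i + x2'$i)"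
        by (simp add: distrib_left)
    qed
    also have "\<dots> = max M 0 * (\<Sum>i\<in>UNIV. x1'$i + x2'$i)" by (simp add: sum_distrib_left)
    also have "\<dots> \<le> max M 0 * k" using sk by (intro mult_left_mono) auto
    finally show ?thesis .
  qed
  have opt': "(M \<le> 0 \<longrightarrow> x1 = 0 \<and> x2 = 0) \<and>
         (0 < M \<longrightarrow>
            (B \<le> A \<and> (\<exists>i. s $ i * c $ i = A \<and> x1 = axis i k \<and> x2 = 0)) \<or>
            (A \<le> B \<and> (\<exists>j. r $ j * c $ j = B \<and> x1 = 0 \<and> x2 = axis j k)))"
    using opt unfolding opt_strategy_def Let_def A_def B_def M_def by blast
  have main: "feasible k x1 x2 \<and>
     (\<Sum>i\<in>UNIV. s$i * c$i * x1$i) + (\<Sum>i\<in>UNIV. r$i * c$i * x2$i) = max M 0 * k"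
  proof (cases "M \<le> 0")
    case True
    then show ?thesis using opt' k by (simp add: feasible_def)
  next
    case False
    then have "0 < M" by simp
    with opt' have
      "(B \<le> A \<and> (\<exists>i. s $ i * c $ i = A \<and> x1 = axis i k \<and> x2 = 0)) \<or>
       (A \<le> B \<and> (\<exists>j. r $ j * c $ j = B \<and> x1 = 0 \<and> x2 = axis j k))" by blast
    then show ?thesis
    proof
      assume "B \<le> A \<and> (\<exists>i. s $ i * c $ i = A \<and> x1 = axis i k \<and> x2 = 0)"
      then obtain i where "B \<le> A" "s $ i * c $ i = A" "x1 = axis i k" "x2 = 0" by blast
      moreover have "(\<Sum>j\<in>UNIV. axis i k $ j) = k" using axis_sum[of "vec 1" i k] by simp
      ultimately show ?thesis using k \<open>0 < M\<close>
        using axis_sum[of "\<chi> j. s$j * c$j" i k]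
        by (auto simp: feasible_def M_def axis_def max_def)
    next
      assume "A \<le> B \<and> (\<exists>j. r $ j * c $ j = B \<and> x1 = 0 \<and> x2 = axis j k)"
      then obtain i where "A \<le> B" "r $ i * c $ i = B" "x1 = 0" "x2 = axis i k" by blast
      moreover have "(\<Sum>j\<in>UNIV. axis i k $ j) = k" using axis_sum[of "vec 1" i k] by simp
      ultimately show ?thesis using k \<open>0 < M\<close>
        using axis_sum[of "\<chi> j. r$j * c$j" i k]
        by (auto simp: feasible_def M_def axis_def max_def)
    qed
  qed
  show ?thesis using main bound by auto
qed


lemma util_eq:
  fixes w :: "real^'n^'n"
  assumes row: "\<And>i. (\<Sum>j\<in>UNIV. \<bar>w $ i $ j\<bar>) < 1"
  shows "utility w w0 wg wb v0 x1 x2 y1 y2 =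
          (\<Sum>i\<in>UNIV. svec w w0 $ i * w0 $ i * v0 $ i)
        + (\<Sum>i\<in>UNIV. svec w w0 $ i * wg $ i * x1 $ i)
        - (\<Sum>i\<in>UNIV. svec w w0 $ i * wb $ i * y1 $ i)
        + (\<Sum>i\<in>UNIV. rvec w $ i * wg $ i * x2 $ i)
        - (\<Sum>i\<in>UNIV. rvec w $ i * wb $ i * y2 $ i)"
proof -
  define P where "P = matrix_inv (mat 1 - w)"
  have inv: "invertible (mat 1 - w)" using row by (rule dd_invertible)
  have tr: "transpose (mat 1 - w) = mat 1 - transpose w"
    by (simp add: vec_eq_iff transpose_def mat_def)
  have Q: "matrix_inv (mat 1 - transpose w) = transpose P"
    using inv_transpose[OF inv] unfolding tr P_def .
  have key: "\<And>c u. (\<Sum>i\<in>UNIV. c$i * (P *v u)$i) = (\<Sum>j\<in>UNIV. (matrix_inv (mat 1 - transpose w) *v c)$j * u$j)"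
    by (metis Q swap_sum)
  define u1 where "u1 = had w0 v0 + had wg x1 - had wb y1"
  define v1 where "v1 = P *v u1"
  define u2 where "u2 = had w0 v1 + had wg x2 - had wb y2"
  have U: "utility w w0 wg wb v0 x1 x2 y1 y2 = (\<Sum>i\<in>UNIV. (vec 1 :: real^'n)$i * (P *v u2)$i)"
    unfolding utility_def opinion2_def phase_step_def P_def u1_def v1_def u2_def by simp
  also have "\<dots> = (\<Sum>j\<in>UNIV. rvec w $ j * u2$j)" by (simp only: key rvec_def)
  also have "\<dots> = (\<Sum>j\<in>UNIV. (had (rvec w) w0)$j * v1$j)
      + (\<Sum>i\<in>UNIV. rvec w $ i * wg $ i * x2 $ i) - (\<Sum>i\<in>UNIV. rvec w $ i * wb $ i * y2 $ i)"
  proof -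
    have "(\<Sum>j\<in>UNIV. rvec w $ j * u2$j) = (\<Sum>j\<in>UNIV. (had (rvec w) w0)$j * v1$j
       + rvec w $ j * wg $ j * x2 $ j - rvec w $ j * wb $ j * y2 $ j)"
      by (rule sum.cong) (simp_all add: u2_def had_def right_diff_distrib distrib_left mult.assoc)
    then show ?thesis by (simp only: sum.distrib sum_subtractf)
  qed
  also have "(\<Sum>j\<in>UNIV. (had (rvec w) w0)$j * v1$j) = (\<Sum>j\<in>UNIV. svec w w0 $ j * u1$j)"
    by (simp only: v1_def key svec_def)
  also have "\<dots> = (\<Sum>i\<in>UNIV. svec w w0 $ i * w0 $ i * v0 $ i)
        + (\<Sum>i\<in>UNIV. svec w w0 $ i * wg $ i * x1 $ i)
        - (\<Sum>i\<in>UNIV. svec w w0 $ i * wb $ i * y1 $ i)"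
  proof -
    have "(\<Sum>j\<in>UNIV. svec w w0 $ j * u1$j) = (\<Sum>j\<in>UNIV. svec w w0 $ j * w0 $ j * v0 $ j
       + svec w w0 $ j * wg $ j * x1 $ j - svec w w0 $ j * wb $ j * y1 $ j)"
      by (rule sum.cong) (simp_all add: u1_def had_def right_diff_distrib distrib_left mult.assoc)
    then show ?thesis by (simp only: sum.distrib sum_subtractf)
  qed
  finally show ?thesis by simp
qed

theorem mainTheorem1:
  fixes w :: "real^'n^'n"
    and w0 wg wb v0 :: "real^'n"
    and kg kb :: real
  assumes row: "\<And>i. (\<Sum>j\<in>UNIV. \<bar>w $ i $ j\<bar>) < 1"
    and tot: "\<And>i. \<bar>w0 $ i\<bar> + (\<Sum>j\<in>UNIV. \<bar>w $ i $ j\<bar>) + \<bar>wg $ i\<bar> + \<bar>wb $ i\<bar> \<le> 1"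
    and kg: "0 \<le> kg" and kb: "0 \<le> kb"
  shows
    "(\<forall>x1 x2 y1 y2.
        utility w w0 wg wb v0 x1 x2 y1 y2 =
          (\<Sum>i\<in>UNIV. svec w w0 $ i * w0 $ i * v0 $ i)
        + (\<Sum>i\<in>UNIV. svec w w0 $ i * wg $ i * x1 $ i)
        - (\<Sum>i\<in>UNIV. svec w w0 $ i * wb $ i * y1 $ i)
        + (\<Sum>i\<in>UNIV. rvec w $ i * wg $ i * x2 $ i)
        - (\<Sum>i\<in>UNIV. rvec w $ i * wb $ i * y2 $ i))
   \<and> (\<forall>x1 x2. opt_strategy (svec w w0) (rvec w) wg kg x1 x2 \<longrightarrow>
        feasible kg x1 x2 \<and>
        (\<forall>y1 y2 x1' x2'. feasible kb y1 y2 \<longrightarrow> feasible kg x1' x2' \<longrightarrow>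
           utility w w0 wg wb v0 x1' x2' y1 y2 \<le> utility w w0 wg wb v0 x1 x2 y1 y2))
   \<and> (\<forall>y1 y2. opt_strategy (svec w w0) (rvec w) wb kb y1 y2 \<longrightarrow>
        feasible kb y1 y2 \<and>
        (\<forall>x1 x2 y1' y2'. feasible kg x1 x2 \<longrightarrow> feasible kb y1' y2' \<longrightarrow>
           - utility w w0 wg wb v0 x1 x2 y1' y2' \<le> - utility w w0 wg wb v0 x1 x2 y1 y2))
   \<and> (\<forall>x1 x2 y1 y2. opt_strategy (svec w w0) (rvec w) wg kg x1 x2 \<longrightarrow>
        opt_strategy (svec w w0) (rvec w) wb kb y1 y2 \<longrightarrow>
        (\<forall>x1' x2'. feasible kg x1' x2' \<longrightarrow>
           utility w w0 wg wb v0 x1' x2' y1 y2 \<le> utility w w0 wg wb v0 x1 x2 y1 y2) \<and>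
        (\<forall>y1' y2'. feasible kb y1' y2' \<longrightarrow>
           - utility w w0 wg wb v0 x1 x2 y1' y2' \<le> - utility w w0 wg wb v0 x1 x2 y1 y2))"
proof -
  note U = util_eq[OF row]
  let ?s = "svec w w0" and ?r = "rvec w"
  have G: "utility w w0 wg wb v0 x1' x2' y1 y2 \<le> utility w w0 wg wb v0 x1 x2 y1 y2"
    if o: "opt_strategy ?s ?r wg kg x1 x2" and f: "feasible kg x1' x2'" for x1 x2 x1' x2' y1 y2
  proof -
    have "(\<Sum>i\<in>UNIV. ?s$i * wg$i * x1'$i) + (\<Sum>i\<in>UNIV. ?r$i * wg$i * x2'$i)
     \<le> (\<Sum>i\<in>UNIV. ?s$i * wg$i * x1$i) + (\<Sum>i\<in>UNIV. ?r$i * wg$i * x2$i)"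
      using opt_lemma[OF o kg] f by blast
    then show ?thesis unfolding U by linarith
  qed
  have B: "- utility w w0 wg wb v0 x1 x2 y1' y2' \<le> - utility w w0 wg wb v0 x1 x2 y1 y2"
    if o: "opt_strategy ?s ?r wb kb y1 y2" and f: "feasible kb y1' y2'" for x1 x2 y1 y2 y1' y2'
  proof -
    have "(\<Sum>i\<in>UNIV. ?s$i * wb$i * y1'$i) + (\<Sum>i\<in>UNIV. ?r$i * wb$i * y2'$i)
     \<le> (\<Sum>i\<in>UNIV. ?s$i * wb$i * y1$i) + (\<Sum>i\<in>UNIV. ?r$i * wb$i * y2$i)"
      using opt_lemma[OF o kb] f by blast
    then show ?thesis unfolding U by linarith
  qed
  have FG: "feasible kg x1 x2" if "opt_strategy ?s ?r wg kg x1 x2" for x1 x2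
    using opt_lemma[OF that kg] by blast
  have FB: "feasible kb y1 y2" if "opt_strategy ?s ?r wb kb y1 y2" for y1 y2
    using opt_lemma[OF that kb] by blast
  show ?thesis
  proof (intro conjI allI impI)
    fix x1 x2 y1 y2
    show "utility w w0 wg wb v0 x1 x2 y1 y2 =
          (\<Sum>i\<in>UNIV. svec w w0 $ i * w0 $ i * v0 $ i)
        + (\<Sum>i\<in>UNIV. svec w w0 $ i * wg $ i * x1 $ i)
        - (\<Sum>i\<in>UNIV. svec w w0 $ i * wb $ i * y1 $ i)
        + (\<Sum>i\<in>UNIV. rvec w $ i * wg $ i * x2 $ i)
        - (\<Sum>i\<in>UNIV. rvec w $ i * wb $ i * y2 $ i)" by (rule U)
  qed (blast intro: G B FG FB)+
qed

end
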